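(* Let $G$ be a cubical $\omega$-category with connections. If $x\in\Phi_n(G_n)$ and $1\le m\le n$, then $\partial^\alpha_mx=\varepsilon_1^{m-1}(\partial^\alpha_1)^mx$ and $\varepsilon_m\partial^\alpha_mx=\varepsilon_1^m(\partial^\alpha_1)^mx$, for $\alpha=\pm$.
   Context: A cubical $\omega$-category with connections $G$ consists of sets $G_n$ ($n\ge0$), face maps $\partial^\alpha_i:G_n\to G_{n-1}$, degeneracies $\varepsilon_i:G_{n-1}\to G_n$, connections $\Gamma^\alpha_i:G_n\to G_{n+1}$ ($1\le i\le n$, $\alpha=\pm$) and partial compositions $\circ_j$ on $G_n$ ($1\le j\le n$, $a\circ_jb$ defined iff $\partial^+_ja=\partial^-_jb$) satisfying: $\partial^\alpha_i\partial^\beta_j=\partial^\beta_{j-1}\partial^\alpha_i$ ($i<j$), $\varepsilon_i\varepsilon_j=\varepsilon_{j+1}\varepsilon_i$ ($i\le j$), $\partial^\alpha_i\varepsilon_j=\varepsilon_{j-1}\partial^\alpha_i$ ($i<j$), $\varepsilon_j\partial^\alpha_{i-1}$ ($i>j$), $\mathrm{id}$ ($i=j$); $\Gamma^\alpha_i\Gamma^\beta_j=\Gamma^\beta_{j+1}\Gamma^\alpha_i$ ($i<j$), $\Gamma^\alpha_i\Gamma^\alpha_i=\Gamma^\alpha_{i+1}\Gamma^\alpha_i$, $\Gamma^\alpha_i\varepsilon_j=\varepsilon_{j+1}\Gamma^\alpha_i$ ($i<j$), $\varepsilon_j\Gamma^\alpha_{i-1}$ ($i>j$), $\Gamma^\alpha_j\varepsilon_j=\varepsilon_{j+1}\varepsilon_j$,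 $\partial^\alpha_i\Gamma^\beta_j=\Gamma^\beta_{j-1}\partial^\alpha_i$ ($i<j$), $\Gamma^\beta_j\partial^\alpha_{i-1}$ ($i>j+1$), $\partial^\alpha_j\Gamma^\alpha_j=\partial^\alpha_{j+1}\Gamma^\alpha_j=\mathrm{id}$, $\partial^\alpha_j\Gamma^{-\alpha}_j=\partial^\alpha_{j+1}\Gamma^{-\alpha}_j=\varepsilon_j\partial^\alpha_j$; $\partial^-_j(a\circ_jb)=\partial^-_ja$, $\partial^+_j(a\circ_jb)=\partial^+_jb$, $\partial^\alpha_i(a\circ_jb)=\partial^\alpha_ia\circ_{j-1}\partial^\alpha_ib$ ($i<j$), $\partial^\alpha_ia\circ_j\partial^\alpha_ib$ ($i>j$); interchange for $i\ne j$; $\varepsilon_i(a\circ_jb)=\varepsilon_ia\circ_{j+1}\varepsilon_ib$ ($i\le j$), $\varepsilon_ia\circ_j\varepsilon_ib$ ($i>j$); $\Gamma^\alpha_i(a\circ_jb)=\Gamma^\alpha_ia\circ_{j+1}\Gamma^\alpha_ib$ ($i<j$), $\Gamma^\alpha_ia\circ_j\Gamma^\alpha_ib$ ($i>j$); $\Gamma^+_j(a\circ_jb)=(\Gamma^+_ja\circ_j\varepsilon_ja)\circ_{j+1}(\varepsilon_{j+1}a\circ_j\Gamma^+_jb)$, $\Gamma^-_j(a\circ_jb)=(\Gamma^-_ja\circ_j\varepsilon_{j+1}b)\circ_{j+1}(\varepsilon_jb\circ_j\Gamma^-_jb)$; each $\circ_j$ is a category structure with identities $\varepsilon_jy$; $\Gamma^+_ix\circ_i\Gamma^-_ix=\varepsilon_{i+1}x$,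 $\Gamma^+_ix\circ_{i+1}\Gamma^-_ix=\varepsilon_ix$. Folding operations on $G_n$: $\psi_ix=\Gamma^+_i\partial^-_{i+1}x\circ_{i+1}x\circ_{i+1}\Gamma^-_i\partial^+_{i+1}x$ ($1\le i\le n-1$), $\Psi_r=\psi_{r-1}\cdots\psi_1$, $\Phi_n=\Psi_1\Psi_2\cdots\Psi_n$. *)

theory Defs
  imports Main
begin

text \<open>
  Cells of dimension n form the set C n.
  Operations carry the dimension of their source explicitly:
    F n i a x  : face  \<partial>^a_i : G_n \<rightarrow> G_(n-1)      (1 \<le> i \<le> n)
    D n i x    : degeneracy \<epsilon>_i : G_(n-1) \<rightarrow> G_n (1 \<le> i \<le> n)   (indexed by TARGET dimension n)
    K n i a x  : connection \<Gamma>^a_i : G_n \<rightarrow> G_(n+1) (1 \<le> i \<le> n)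
    P n j x y  : composite x \<circ>_j y in G_n (1 \<le> j \<le> n), meaningful iff F n j True x = F n j False y.
  The sign alpha is a boolean: True means +, False means -.
\<close>

locale cubical_omega_cat_conn =
  fixes C :: "nat \<Rightarrow> 'a set"
    and F :: "nat \<Rightarrow> nat \<Rightarrow> bool \<Rightarrow> 'a \<Rightarrow> 'a"
    and D :: "nat \<Rightarrow> nat \<Rightarrow> 'a \<Rightarrow> 'a"
    and K :: "nat \<Rightarrow> nat \<Rightarrow> bool \<Rightarrow> 'a \<Rightarrow> 'a"
    and P :: "nat \<Rightarrow> nat \<Rightarrow> 'a \<Rightarrow> 'a \<Rightarrow> 'a"
  assumes face_closed: "\<And>n i a x. x \<in> C n \<Longrightarrow> 1 \<le> i \<Longrightarrow> i \<le> n \<Longrightarrow> F n i a x \<in> C (n - 1)"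
    and degen_closed: "\<And>n i x. x \<in> C (n - 1) \<Longrightarrow> 1 \<le> i \<Longrightarrow> i \<le> n \<Longrightarrow> D n i x \<in> C n"
    and conn_closed: "\<And>n i a x. x \<in> C n \<Longrightarrow> 1 \<le> i \<Longrightarrow> i \<le> n \<Longrightarrow> K n i a x \<in> C (Suc n)"
    and comp_closed: "\<And>n j x y. x \<in> C n \<Longrightarrow> y \<in> C n \<Longrightarrow> 1 \<le> j \<Longrightarrow> j \<le> n \<Longrightarrow>
        F n j True x = F n j False y \<Longrightarrow> P n j x y \<in> C n"
    and face_face: "\<And>n i j a b x. x \<in> C n \<Longrightarrow> 1 \<le> i \<Longrightarrow> i < j \<Longrightarrow> j \<le> n \<Longrightarrow>
        F (n - 1) i a (F n j b x) = F (n - 1) (j - 1) b (F n i a x)"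
    and degen_degen: "\<And>n i j x. x \<in> C n \<Longrightarrow> 1 \<le> i \<Longrightarrow> i \<le> j \<Longrightarrow> j \<le> n + 1 \<Longrightarrow>
        D (n + 2) i (D (n + 1) j x) = D (n + 2) (j + 1) (D (n + 1) i x)"
    and face_degen_lt: "\<And>n i j a x. x \<in> C n \<Longrightarrow> 1 \<le> i \<Longrightarrow> i < j \<Longrightarrow> j \<le> n + 1 \<Longrightarrow>
        F (n + 1) i a (D (n + 1) j x) = D n (j - 1) (F n i a x)"
    and face_degen_gt: "\<And>n i j a x. x \<in> C n \<Longrightarrow> 1 \<le> j \<Longrightarrow> j < i \<Longrightarrow> i \<le> n + 1 \<Longrightarrow>
        F (n + 1) i a (D (n + 1) j x) = D n j (F n (i - 1) a x)"
    and face_degen_eq: "\<And>n i a x. x \<in> C n \<Longrightarrow> 1 \<le> i \<Longrightarrow> i \<le> n + 1 \<Longrightarrow>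
        F (n + 1) i a (D (n + 1) i x) = x"
    and conn_conn: "\<And>n i j a b x. x \<in> C n \<Longrightarrow> 1 \<le> i \<Longrightarrow> i < j \<Longrightarrow> j \<le> n \<Longrightarrow>
        K (n + 1) i a (K n j b x) = K (n + 1) (j + 1) b (K n i a x)"
    and conn_conn_eq: "\<And>n i a x. x \<in> C n \<Longrightarrow> 1 \<le> i \<Longrightarrow> i \<le> n \<Longrightarrow>
        K (n + 1) i a (K n i a x) = K (n + 1) (i + 1) a (K n i a x)"
    and conn_degen_lt: "\<And>n i j a x. x \<in> C n \<Longrightarrow> 1 \<le> i \<Longrightarrow> i < j \<Longrightarrow> j \<le> n + 1 \<Longrightarrow>
        K (n + 1) i a (D (n + 1) j x) = D (n + 2) (j + 1) (K n i a x)"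
    and conn_degen_gt: "\<And>n i j a x. x \<in> C n \<Longrightarrow> 1 \<le> j \<Longrightarrow> j < i \<Longrightarrow> i \<le> n + 1 \<Longrightarrow>
        K (n + 1) i a (D (n + 1) j x) = D (n + 2) j (K n (i - 1) a x)"
    and conn_degen_eq: "\<And>n j a x. x \<in> C n \<Longrightarrow> 1 \<le> j \<Longrightarrow> j \<le> n + 1 \<Longrightarrow>
        K (n + 1) j a (D (n + 1) j x) = D (n + 2) (j + 1) (D (n + 1) j x)"
    and face_conn_lt: "\<And>n i j a b x. x \<in> C n \<Longrightarrow> 1 \<le> i \<Longrightarrow> i < j \<Longrightarrow> j \<le> n \<Longrightarrow>
        F (n + 1) i a (K n j b x) = K (n - 1) (j - 1) b (F n i a x)"
    and face_conn_gt: "\<And>n i j a b x. x \<in> C n \<Longrightarrow> 1 \<le> j \<Longrightarrow> j + 1 < i \<Longrightarrow> i \<le> n + 1 \<Longrightarrow>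
        F (n + 1) i a (K n j b x) = K (n - 1) j b (F n (i - 1) a x)"
    and face_conn_same1: "\<And>n j a x. x \<in> C n \<Longrightarrow> 1 \<le> j \<Longrightarrow> j \<le> n \<Longrightarrow>
        F (n + 1) j a (K n j a x) = x"
    and face_conn_same2: "\<And>n j a x. x \<in> C n \<Longrightarrow> 1 \<le> j \<Longrightarrow> j \<le> n \<Longrightarrow>
        F (n + 1) (j + 1) a (K n j a x) = x"
    and face_conn_opp1: "\<And>n j a x. x \<in> C n \<Longrightarrow> 1 \<le> j \<Longrightarrow> j \<le> n \<Longrightarrow>
        F (n + 1) j a (K n j (\<not> a) x) = D n j (F n j a x)"
    and face_conn_opp2: "\<And>n j a x. x \<in> C n \<Longrightarrow> 1 \<le> j \<Longrightarrow> j \<le> n \<Longrightarrow>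
        F (n + 1) (j + 1) a (K n j (\<not> a) x) = D n j (F n j a x)"
    and face_comp_minus: "\<And>n j x y. x \<in> C n \<Longrightarrow> y \<in> C n \<Longrightarrow> 1 \<le> j \<Longrightarrow> j \<le> n \<Longrightarrow>
        F n j True x = F n j False y \<Longrightarrow> F n j False (P n j x y) = F n j False x"
    and face_comp_plus: "\<And>n j x y. x \<in> C n \<Longrightarrow> y \<in> C n \<Longrightarrow> 1 \<le> j \<Longrightarrow> j \<le> n \<Longrightarrow>
        F n j True x = F n j False y \<Longrightarrow> F n j True (P n j x y) = F n j True y"
    and face_comp_lt: "\<And>n i j a x y. x \<in> C n \<Longrightarrow> y \<in> C n \<Longrightarrow> 1 \<le> i \<Longrightarrow> i < j \<Longrightarrow> j \<le> n \<Longrightarrow>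
        F n j True x = F n j False y \<Longrightarrow>
        F n i a (P n j x y) = P (n - 1) (j - 1) (F n i a x) (F n i a y)"
    and face_comp_gt: "\<And>n i j a x y. x \<in> C n \<Longrightarrow> y \<in> C n \<Longrightarrow> 1 \<le> j \<Longrightarrow> j < i \<Longrightarrow> i \<le> n \<Longrightarrow>
        F n j True x = F n j False y \<Longrightarrow>
        F n i a (P n j x y) = P (n - 1) j (F n i a x) (F n i a y)"
    and interchange: "\<And>n i j w x y z. w \<in> C n \<Longrightarrow> x \<in> C n \<Longrightarrow> y \<in> C n \<Longrightarrow> z \<in> C n \<Longrightarrow>
        1 \<le> i \<Longrightarrow> i \<le> n \<Longrightarrow> 1 \<le> j \<Longrightarrow> j \<le> n \<Longrightarrow> i \<noteq> j \<Longrightarrow>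
        F n i True w = F n i False x \<Longrightarrow> F n i True y = F n i False z \<Longrightarrow>
        F n j True w = F n j False y \<Longrightarrow> F n j True x = F n j False z \<Longrightarrow>
        P n j (P n i w x) (P n i y z) = P n i (P n j w y) (P n j x z)"
    and degen_comp_le: "\<And>n i j x y. x \<in> C n \<Longrightarrow> y \<in> C n \<Longrightarrow> 1 \<le> i \<Longrightarrow> i \<le> j \<Longrightarrow> j \<le> n \<Longrightarrow>
        F n j True x = F n j False y \<Longrightarrow>
        D (n + 1) i (P n j x y) = P (n + 1) (j + 1) (D (n + 1) i x) (D (n + 1) i y)"
    and degen_comp_gt: "\<And>n i j x y. x \<in> C n \<Longrightarrow> y \<in> C n \<Longrightarrow> 1 \<le> j \<Longrightarrow> j < i \<Longrightarrow> i \<le> n + 1 \<Longrightarrow>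
        F n j True x = F n j False y \<Longrightarrow>
        D (n + 1) i (P n j x y) = P (n + 1) j (D (n + 1) i x) (D (n + 1) i y)"
    and conn_comp_lt: "\<And>n i j a x y. x \<in> C n \<Longrightarrow> y \<in> C n \<Longrightarrow> 1 \<le> i \<Longrightarrow> i < j \<Longrightarrow> j \<le> n \<Longrightarrow>
        F n j True x = F n j False y \<Longrightarrow>
        K n i a (P n j x y) = P (n + 1) (j + 1) (K n i a x) (K n i a y)"
    and conn_comp_gt: "\<And>n i j a x y. x \<in> C n \<Longrightarrow> y \<in> C n \<Longrightarrow> 1 \<le> j \<Longrightarrow> j < i \<Longrightarrow> i \<le> n \<Longrightarrow>
        F n j True x = F n j False y \<Longrightarrow>
        K n i a (P n j x y) = P (n + 1) j (K n i a x) (K n i a y)"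
    and conn_comp_plus: "\<And>n j x y. x \<in> C n \<Longrightarrow> y \<in> C n \<Longrightarrow> 1 \<le> j \<Longrightarrow> j \<le> n \<Longrightarrow>
        F n j True x = F n j False y \<Longrightarrow>
        K n j True (P n j x y) =
          P (n + 1) (j + 1) (P (n + 1) j (K n j True x) (D (n + 1) j x))
                            (P (n + 1) j (D (n + 1) (j + 1) x) (K n j True y))"
    and conn_comp_minus: "\<And>n j x y. x \<in> C n \<Longrightarrow> y \<in> C n \<Longrightarrow> 1 \<le> j \<Longrightarrow> j \<le> n \<Longrightarrow>
        F n j True x = F n j False y \<Longrightarrow>
        K n j False (P n j x y) =
          P (n + 1) (j + 1) (P (n + 1) j (K n j False x) (D (n + 1) (j + 1) y))
                            (P (n + 1) j (D (n + 1) j y) (K n j False y))"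
    and comp_assoc: "\<And>n j x y z. x \<in> C n \<Longrightarrow> y \<in> C n \<Longrightarrow> z \<in> C n \<Longrightarrow> 1 \<le> j \<Longrightarrow> j \<le> n \<Longrightarrow>
        F n j True x = F n j False y \<Longrightarrow> F n j True y = F n j False z \<Longrightarrow>
        P n j (P n j x y) z = P n j x (P n j y z)"
    and comp_left_id: "\<And>n j x. x \<in> C n \<Longrightarrow> 1 \<le> j \<Longrightarrow> j \<le> n \<Longrightarrow>
        P n j (D n j (F n j False x)) x = x"
    and comp_right_id: "\<And>n j x. x \<in> C n \<Longrightarrow> 1 \<le> j \<Longrightarrow> j \<le> n \<Longrightarrow>
        P n j x (D n j (F n j True x)) = x"
    and conn_cancel1: "\<And>n i x. x \<in> C n \<Longrightarrow> 1 \<le> i \<Longrightarrow> i \<le> n \<Longrightarrow>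
        P (n + 1) i (K n i True x) (K n i False x) = D (n + 1) (i + 1) x"
    and conn_cancel2: "\<And>n i x. x \<in> C n \<Longrightarrow> 1 \<le> i \<Longrightarrow> i \<le> n \<Longrightarrow>
        P (n + 1) (i + 1) (K n i True x) (K n i False x) = D (n + 1) i x"

text \<open>Folding operation \<psi>_i on G_n (1 \<le> i \<le> n-1):
  \<psi>_i x = \<Gamma>^+_i \<partial>^-_(i+1) x \<circ>_(i+1) x \<circ>_(i+1) \<Gamma>^-_i \<partial>^+_(i+1) x
  (bracketed to the left; composition is associative).\<close>
definition psi ::
  "(nat \<Rightarrow> nat \<Rightarrow> bool \<Rightarrow> 'a \<Rightarrow> 'a) \<Rightarrow> (nat \<Rightarrow> nat \<Rightarrow> bool \<Rightarrow> 'a \<Rightarrow> 'a) \<Rightarrow>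
   (nat \<Rightarrow> nat \<Rightarrow> 'a \<Rightarrow> 'a \<Rightarrow> 'a) \<Rightarrow> nat \<Rightarrow> nat \<Rightarrow> 'a \<Rightarrow> 'a" where
  "psi F K P n i x =
     P n (i + 1) (P n (i + 1) (K (n - 1) i True (F n (i + 1) False x)) x)
                 (K (n - 1) i False (F n (i + 1) True x))"

primrec psi_upto ::
  "(nat \<Rightarrow> nat \<Rightarrow> bool \<Rightarrow> 'a \<Rightarrow> 'a) \<Rightarrow> (nat \<Rightarrow> nat \<Rightarrow> bool \<Rightarrow> 'a \<Rightarrow> 'a) \<Rightarrow>
   (nat \<Rightarrow> nat \<Rightarrow> 'a \<Rightarrow> 'a \<Rightarrow> 'a) \<Rightarrow> nat \<Rightarrow> nat \<Rightarrow> 'a \<Rightarrow> 'a" where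
  "psi_upto F K P n 0 x = x"
| "psi_upto F K P n (Suc k) x = psi F K P n (Suc k) (psi_upto F K P n k x)"

text \<open>\<Psi>_r = \<psi>_(r-1) \<circ> ... \<circ> \<psi>_1 (so \<Psi>_1 = id).\<close>
definition Psi where
  "Psi F K P n r = psi_upto F K P n (r - 1)"

primrec Phi_upto ::
  "(nat \<Rightarrow> nat \<Rightarrow> bool \<Rightarrow> 'a \<Rightarrow> 'a) \<Rightarrow> (nat \<Rightarrow> nat \<Rightarrow> bool \<Rightarrow> 'a \<Rightarrow> 'a) \<Rightarrow>
   (nat \<Rightarrow> nat \<Rightarrow> 'a \<Rightarrow> 'a \<Rightarrow> 'a) \<Rightarrow> nat \<Rightarrow> nat \<Rightarrow> 'a \<Rightarrow> 'a" where
  "Phi_upto F K P n 0 x = x"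
| "Phi_upto F K P n (Suc k) x = Phi_upto F K P n k (Psi F K P n (Suc k) x)"

definition Phi where
  "Phi F K P n = Phi_upto F K P n n"

primrec face1_iter :: "(nat \<Rightarrow> nat \<Rightarrow> bool \<Rightarrow> 'a \<Rightarrow> 'a) \<Rightarrow> nat \<Rightarrow> nat \<Rightarrow> bool \<Rightarrow> 'a \<Rightarrow> 'a" where
  "face1_iter F n 0 a x = x"
| "face1_iter F n (Suc k) a x = F (n - k) 1 a (face1_iter F n k a x)"

text \<open>\<epsilon>_1^k y for y \<in> G_d (result in G_(d+k)).\<close>
primrec degen1_iter :: "(nat \<Rightarrow> nat \<Rightarrow> 'a \<Rightarrow> 'a) \<Rightarrow> nat \<Rightarrow> nat \<Rightarrow> 'a \<Rightarrow> 'a" where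
  "degen1_iter D d 0 y = y"
| "degen1_iter D d (Suc k) y = D (d + Suc k) 1 (degen1_iter D d k y)"

end

theory Submission
  imports Defs
begin
context cubical_omega_cat_conn begin

lemma face1_iter_closed: "x \<in> C n \<Longrightarrow> k \<le> n \<Longrightarrow> face1_iter F n k a x \<in> C (n - k)"
proof (induction k)
  case 0 then show ?case by simp
next
  case (Suc k)
  then have h: "face1_iter F n k a x \<in> C (n - k)" by simp
  have "1 \<le> n - k" using Suc.prems by simp
  from face_closed[OF h, of 1 a] this have "F (n - k) 1 a (face1_iter F n k a x) \<in> C (n - k - 1)" by simp
  moreover have "n - k - 1 = n - Suc k" by simp
  ultimately show ?case by simp
qed

lemma degen1_iter_closed: "z \<in> C d \<Longrightarrow> degen1_iter D d k z \<in> C (d + k)"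
proof (induction k)
  case 0 then show ?case by simp
next
  case (Suc k)
  then show ?case using degen_closed[of "degen1_iter D d k z" "d + Suc k" 1] by simp
qed
lemma psi_parts:
  assumes x: "x \<in> C (Suc k)" and i: "1 \<le> i" "i \<le> k"
  shows "K k i True (F (Suc k) (i+1) False x) \<in> C (Suc k)"
    and "K k i False (F (Suc k) (i+1) True x) \<in> C (Suc k)"
    and "F (Suc k) (i+1) True (K k i True (F (Suc k) (i+1) False x)) = F (Suc k) (i+1) False x"
    and "F (Suc k) (i+1) False (K k i False (F (Suc k) (i+1) True x)) = F (Suc k) (i+1) True x"
    and "P (Suc k) (i+1) (K k i True (F (Suc k) (i+1) False x)) x \<in> C (Suc k)"
    and "F (Suc k) (i+1) True (P (Suc k) (i+1) (K k i True (F (Suc k) (i+1) False x)) x) = F (Suc k) (i+1) True x"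
    and "F (Suc k) (i+1) False (P (Suc k) (i+1) (K k i True (F (Suc k) (i+1) False x)) x) = D k i (F k i False (F (Suc k) (i+1) False x))"
proof -
  have f1: "F (Suc k) (i+1) False x \<in> C k" using face_closed[OF x, of "i+1" False] i by simp
  have f2: "F (Suc k) (i+1) True x \<in> C k" using face_closed[OF x, of "i+1" True] i by simp
  show L: "K k i True (F (Suc k) (i+1) False x) \<in> C (Suc k)" using conn_closed[OF f1] i by simp
  show "K k i False (F (Suc k) (i+1) True x) \<in> C (Suc k)" using conn_closed[OF f2] i by simp
  show e1: "F (Suc k) (i+1) True (K k i True (F (Suc k) (i+1) False x)) = F (Suc k) (i+1) False x"
    using face_conn_same2[OF f1, of i True] i by simp
  show "F (Suc k) (i+1) False (K k i False (F (Suc k) (i+1) True x)) = F (Suc k) (i+1) True x"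
    using face_conn_same2[OF f2, of i False] i by simp
  show "P (Suc k) (i+1) (K k i True (F (Suc k) (i+1) False x)) x \<in> C (Suc k)"
    using comp_closed[OF L x, of "i+1"] e1 i by simp
  show "F (Suc k) (i+1) True (P (Suc k) (i+1) (K k i True (F (Suc k) (i+1) False x)) x) = F (Suc k) (i+1) True x"
    using face_comp_plus[OF L x, of "i+1"] e1 i by simp
  have "F (Suc k) (i+1) False (P (Suc k) (i+1) (K k i True (F (Suc k) (i+1) False x)) x)
     = F (Suc k) (i+1) False (K k i True (F (Suc k) (i+1) False x))"
    using face_comp_minus[OF L x, of "i+1"] e1 i by simp
  also have "\<dots> = D k i (F k i False (F (Suc k) (i+1) False x))"
    using face_conn_opp2[OF f1, of i False] i by simp
  finally show "F (Suc k) (i+1) False (P (Suc k) (i+1) (K k i True (F (Suc k) (i+1) False x)) x) = D k i (F k i False (F (Suc k) (i+1) False x))" .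
qed

lemma psi_Suc: "psi F K P (Suc k) i x = P (Suc k) (i + 1) (P (Suc k) (i + 1) (K k i True (F (Suc k) (i + 1) False x)) x)
                 (K k i False (F (Suc k) (i + 1) True x))"
  by (simp add: psi_def)

lemma psi_closed:
  assumes x: "x \<in> C (Suc k)" and i: "1 \<le> i" "i \<le> k"
  shows "psi F K P (Suc k) i x \<in> C (Suc k)"
  unfolding psi_Suc using comp_closed[OF psi_parts(5,2)[OF x i], of "i+1"] psi_parts(6,4)[OF x i] i by simp

lemma face_psi_top:
  assumes x: "x \<in> C (Suc k)" and i: "1 \<le> i" "i \<le> k"
  shows "F (Suc k) (i+1) a (psi F K P (Suc k) i x) = D k i (F k i a (F (Suc k) (i+1) a x))"
proof (cases a)
  case True
  have f2: "F (Suc k) (i+1) True x \<in> C k" using face_closed[OF x, of "i+1" True] i by simp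
  have "F (Suc k) (i+1) True (psi F K P (Suc k) i x) = F (Suc k) (i+1) True (K k i False (F (Suc k) (i+1) True x))"
    unfolding psi_Suc using face_comp_plus[OF psi_parts(5,2)[OF x i], of "i+1"] psi_parts(6,4)[OF x i] i by simp
  also have "\<dots> = D k i (F k i True (F (Suc k) (i+1) True x))"
    using face_conn_opp2[OF f2, of i True] i by simp
  finally show ?thesis using True by simp
next
  case False
  have "F (Suc k) (i+1) False (psi F K P (Suc k) i x) = F (Suc k) (i+1) False (P (Suc k) (i+1) (K k i True (F (Suc k) (i+1) False x)) x)"
    unfolding psi_Suc using face_comp_minus[OF psi_parts(5,2)[OF x i], of "i+1"] psi_parts(6,4)[OF x i] i by simp
  then show ?thesis using psi_parts(7)[OF x i] False by simp
qed


lemma face_psi_gt: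
  assumes x: "x \<in> C (Suc k)" and i: "1 \<le> i" "i + 1 < j" "j \<le> Suc k"
  shows "F (Suc k) j a (psi F K P (Suc k) i x) = psi F K P k i (F (Suc k) j a x)"
proof -
  have ik: "i \<le> k" using i by simp
  obtain k' where k': "k = Suc k'" using i by (cases k) auto
  let ?L = "K k i True (F (Suc k) (i+1) False x)"
  let ?R = "K k i False (F (Suc k) (i+1) True x)"
  note pp = psi_parts[OF x i(1) ik]
  have f1: "F (Suc k) (i+1) False x \<in> C k" using face_closed[OF x, of "i+1" False] i by simp
  have f2: "F (Suc k) (i+1) True x \<in> C k" using face_closed[OF x, of "i+1" True] i by simp
  have e1: "F (Suc k) j a (P (Suc k) (i+1) (P (Suc k) (i+1) ?L x) ?R)
      = P k (i+1) (F (Suc k) j a (P (Suc k) (i+1) ?L x)) (F (Suc k) j a ?R)"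
    using face_comp_gt[OF pp(5) pp(2), of "i+1" j a] pp(6) pp(4) i by simp
  have e2: "F (Suc k) j a (P (Suc k) (i+1) ?L x) = P k (i+1) (F (Suc k) j a ?L) (F (Suc k) j a x)"
    using face_comp_gt[OF pp(1) x, of "i+1" j a] pp(3) i by simp
  have ff: "\<And>b. F k (j - 1) a (F (Suc k) (i+1) b x) = F k (i+1) b (F (Suc k) j a x)"
    using face_face[OF x, of "i+1" j] i by simp
  have e3: "F (Suc k) j a ?L = K k' i True (F k (i+1) False (F (Suc k) j a x))"
    using face_conn_gt[OF f1, of i j a True] i ff[of False] k' by simp
  have e4: "F (Suc k) j a ?R = K k' i False (F k (i+1) True (F (Suc k) j a x))"
    using face_conn_gt[OF f2, of i j a False] i ff[of True] k' by simp
  show ?thesis unfolding psi_Suc using e1 e2 e3 e4 k' by (simp add: psi_def)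
qed

lemma psi_upto_closed: "x \<in> C n \<Longrightarrow> r < n \<Longrightarrow> psi_upto F K P n r x \<in> C n"
proof (induction r)
  case 0 then show ?case by simp
next
  case (Suc r)
  then obtain k where k: "n = Suc k" by (cases n) auto
  have "psi_upto F K P n r x \<in> C n" using Suc by simp
  then show ?case using psi_closed[of "psi_upto F K P n r x" k "Suc r"] k Suc.prems by simp
qed

lemma face_psi_upto: "x \<in> C n \<Longrightarrow> r + 1 < j \<Longrightarrow> j \<le> n \<Longrightarrow>
   F n j a (psi_upto F K P n r x) = psi_upto F K P (n - 1) r (F n j a x)"
proof (induction r)
  case 0 then show ?case by simp
next
  case (Suc r)
  then obtain k where k: "n = Suc k" by (cases n) auto
  have w: "psi_upto F K P n r x \<in> C n" using psi_upto_closed Suc.prems by simp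
  have "F n j a (psi_upto F K P n (Suc r) x) = psi F K P k (Suc r) (F n j a (psi_upto F K P n r x))"
    using face_psi_gt[of "psi_upto F K P n r x" k "Suc r" j a] w k Suc.prems by simp
  then show ?case using Suc k by simp
qed

lemma face_Phi_upto: "x \<in> C n \<Longrightarrow> r < m \<Longrightarrow> m \<le> n \<Longrightarrow>
   F n m a (Phi_upto F K P n r x) = Phi_upto F K P (n - 1) r (F n m a x)"
proof (induction r arbitrary: x)
  case 0 then show ?case by simp
next
  case (Suc r)
  have w: "psi_upto F K P n r x \<in> C n" using psi_upto_closed Suc.prems by simp
  have "F n m a (Phi_upto F K P n (Suc r) x) = Phi_upto F K P (n - 1) r (F n m a (psi_upto F K P n r x))"
    using Suc.IH[OF w] Suc.prems by (simp add: Psi_def)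
  also have "\<dots> = Phi_upto F K P (n - 1) r (psi_upto F K P (n - 1) r (F n m a x))"
    using face_psi_upto[of x n r m a] Suc.prems by simp
  finally show ?case by (simp add: Psi_def)
qed

lemma D_degen1: "z \<in> C d \<Longrightarrow> D (d + k + 1) (k + 1) (degen1_iter D d k z) = degen1_iter D d (k + 1) z"
proof (induction k)
  case 0 then show ?case by simp
next
  case (Suc k)
  have w: "degen1_iter D d k z \<in> C (d + k)" using degen1_iter_closed Suc.prems by simp
  have "D (d + Suc k + 1) (Suc k + 1) (degen1_iter D d (Suc k) z)
      = D (d + k + 2) (k + 2) (D (d + k + 1) 1 (degen1_iter D d k z))" by simp
  also have "\<dots> = D (d + k + 2) 1 (D (d + k + 1) (k + 1) (degen1_iter D d k z))"
    using degen_degen[OF w, of 1 "k+1"] by simp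
  also have "\<dots> = D (d + k + 2) 1 (degen1_iter D d (k + 1) z)" using Suc by simp
  finally show ?case by simp
qed


lemma psi1_degen:
  assumes w: "w \<in> C (Suc k)"
  shows "psi F K P (Suc (Suc k)) 1 (D (Suc (Suc k)) 1 w) = D (Suc (Suc k)) 1 w"
proof -
  let ?n = "Suc (Suc k)" and ?x = "D (Suc (Suc k)) 1 w"
  have x: "?x \<in> C ?n" using degen_closed[of w ?n 1] w by (simp add: numeral_2_eq_2)
  have fa: "\<And>a. F ?n 2 a ?x = D (Suc k) 1 (F (Suc k) 1 a w)"
    using face_degen_gt[OF w, of 1 2] by (simp add: numeral_2_eq_2)
  have v: "\<And>a. F (Suc k) 1 a w \<in> C k" using face_closed[OF w, of 1] by (simp add: numeral_2_eq_2)
  have kd: "\<And>a b. K (Suc k) 1 b (D (Suc k) 1 (F (Suc k) 1 a w)) = D ?n 2 (D (Suc k) 1 (F (Suc k) 1 a w))"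
    using conn_degen_eq[OF v, of 1] by (simp add: numeral_2_eq_2)
  have l: "P ?n 2 (K (Suc k) 1 True (F ?n 2 False ?x)) ?x = ?x"
    using comp_left_id[OF x, of 2] fa kd by (simp add: numeral_2_eq_2)
  have r: "P ?n 2 ?x (K (Suc k) 1 False (F ?n 2 True ?x)) = ?x"
    using comp_right_id[OF x, of 2] fa kd by (simp add: numeral_2_eq_2)
  show ?thesis unfolding psi_Suc using l r by (simp add: numeral_2_eq_2)
qed

lemma psi_degen_gt:
  assumes w: "w \<in> C (Suc k)" and i: "1 \<le> i'" "i' \<le> k"
  shows "psi F K P (Suc (Suc k)) (Suc i') (D (Suc (Suc k)) 1 w) = D (Suc (Suc k)) 1 (psi F K P (Suc k) i' w)"
proof -
  let ?n = "Suc (Suc k)" and ?x = "D (Suc (Suc k)) 1 w" and ?N = "Suc k"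
  note pp = psi_parts[OF w i]
  have fa: "\<And>a. F ?n (Suc i' + 1) a ?x = D ?N 1 (F ?N (i' + 1) a w)"
    using face_degen_gt[OF w, of 1 "Suc i' + 1"] i by simp
  have v: "\<And>a. F ?N (i' + 1) a w \<in> C k" using face_closed[OF w, of "i'+1"] i by simp
  have kd: "\<And>a b. K ?N (Suc i') b (D ?N 1 (F ?N (i' + 1) a w)) = D ?n 1 (K k i' b (F ?N (i' + 1) a w))"
    using conn_degen_gt[OF v, of 1 "Suc i'"] i by simp
  have c1: "P ?n (Suc i' + 1) (D ?n 1 (K k i' True (F ?N (i' + 1) False w))) (D ?n 1 w)
     = D ?n 1 (P ?N (i' + 1) (K k i' True (F ?N (i' + 1) False w)) w)"
    using degen_comp_le[OF pp(1) w, of 1 "i'+1"] pp(3) i by simp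
  have c2: "P ?n (Suc i' + 1) (D ?n 1 (P ?N (i' + 1) (K k i' True (F ?N (i' + 1) False w)) w))
       (D ?n 1 (K k i' False (F ?N (i' + 1) True w)))
     = D ?n 1 (P ?N (i' + 1) (P ?N (i' + 1) (K k i' True (F ?N (i' + 1) False w)) w) (K k i' False (F ?N (i' + 1) True w)))"
    using degen_comp_le[OF pp(5) pp(2), of 1 "i'+1"] pp(6) pp(4) i by simp
  have "psi F K P ?n (Suc i') ?x = P ?n (Suc i' + 1) (P ?n (Suc i' + 1) (D ?n 1 (K k i' True (F ?N (i' + 1) False w))) ?x)
       (D ?n 1 (K k i' False (F ?N (i' + 1) True w)))"
    unfolding psi_Suc[of "Suc k"] using fa kd by simp
  also have "\<dots> = D ?n 1 (psi F K P ?N i' w)" using c1 c2 unfolding psi_Suc by simp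
  finally show ?thesis .
qed

lemma psi_deg: "z \<in> C d \<Longrightarrow> 1 \<le> i \<Longrightarrow> i \<le> k \<Longrightarrow> i + 1 \<le> d + k \<Longrightarrow>
   psi F K P (d + k) i (degen1_iter D d k z) = degen1_iter D d k z"
proof (induction k arbitrary: i)
  case 0 then show ?case by simp
next
  case (Suc k)
  have w: "degen1_iter D d k z \<in> C (d + k)" using degen1_iter_closed Suc.prems by simp
  obtain k'' where k'': "d + k = Suc k''" using Suc.prems by (cases "d + k") auto
  show ?case
  proof (cases "i = 1")
    case True
    then show ?thesis using psi1_degen[of "degen1_iter D d k z" k''] w k'' by simp
  next
    case False
    then obtain i' where i': "i = Suc i'" "1 \<le> i'" using Suc.prems by (cases i) auto
    have "psi F K P (d + Suc k) i (degen1_iter D d (Suc k) z)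
        = D (d + Suc k) 1 (psi F K P (d + k) i' (degen1_iter D d k z))"
      using psi_degen_gt[of "degen1_iter D d k z" k'' i'] w k'' i' Suc.prems by simp
    also have "\<dots> = degen1_iter D d (Suc k) z" using Suc.IH[of i'] Suc.prems i' by simp
    finally show ?thesis .
  qed
qed

lemma psi_upto_deg: "z \<in> C d \<Longrightarrow> r \<le> k \<Longrightarrow> r < d + k \<Longrightarrow>
   psi_upto F K P (d + k) r (degen1_iter D d k z) = degen1_iter D d k z"
  by (induction r) (simp_all add: psi_deg)

lemma Phi_upto_deg: "z \<in> C d \<Longrightarrow> r \<le> k \<Longrightarrow>
   Phi_upto F K P (d + k) r (degen1_iter D d k z) = degen1_iter D d k z"
  by (induction r) (simp_all add: psi_upto_deg Psi_def)

lemma Phi_reduce: "x \<in> C n \<Longrightarrow> m + j \<le> n \<Longrightarrow> \<exists>y\<in>C n. Phi_upto F K P n (m + j) x = Phi_upto F K P n m y"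
proof (induction j arbitrary: x)
  case 0 then show ?case by auto
next
  case (Suc j)
  have w: "psi_upto F K P n (m + j) x \<in> C n" using psi_upto_closed Suc.prems by simp
  have "Phi_upto F K P n (m + Suc j) x = Phi_upto F K P n (m + j) (psi_upto F K P n (m + j) x)"
    by (simp add: Psi_def)
  then show ?case using Suc.IH[OF w] Suc.prems by simp
qed

lemma face1_shift: "face1_iter F N (Suc k) a x = face1_iter F (N - 1) k a (F N 1 a x)"
  by (induction k) simp_all

lemma face1_degen: "z \<in> C d \<Longrightarrow> face1_iter F (d + k) k a (degen1_iter D d k z) = z"
proof (induction k)
  case 0 then show ?case by simp
next
  case (Suc k)
  have w: "degen1_iter D d k z \<in> C (d + k)" using degen1_iter_closed Suc.prems by simp
  have "face1_iter F (d + Suc k) (Suc k) a (degen1_iter D d (Suc k) z)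
      = face1_iter F (d + k) k a (F (d + k + 1) 1 a (D (d + k + 1) 1 (degen1_iter D d k z)))"
    unfolding face1_shift by simp
  also have "\<dots> = face1_iter F (d + k) k a (degen1_iter D d k z)"
    using face_degen_eq[OF w, of 1 a] by simp
  finally show ?case using Suc by simp
qed

lemma face1_comm: "x \<in> C n \<Longrightarrow> k < j \<Longrightarrow> j \<le> n \<Longrightarrow>
   face1_iter F (n - 1) k a (F n j a x) = F (n - k) (j - k) a (face1_iter F n k a x)"
proof (induction k)
  case 0 then show ?case by simp
next
  case (Suc k)
  have w: "face1_iter F n k a x \<in> C (n - k)" using face1_iter_closed Suc.prems by simp
  have "face1_iter F (n - 1) (Suc k) a (F n j a x) = F (n - 1 - k) 1 a (F (n - k) (j - k) a (face1_iter F n k a x))"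
    using Suc by simp
  also have "\<dots> = F (n - k - 1) (j - k - 1) a (F (n - k) 1 a (face1_iter F n k a x))"
    using face_face[OF w, of 1 "j - k" a a] Suc.prems by simp
  moreover have "n - k - 1 = n - Suc k" "j - k - 1 = j - Suc k" by simp_all
  ultimately show ?case by simp
qed


lemma Phi_upto_closed: "x \<in> C n \<Longrightarrow> r \<le> n \<Longrightarrow> Phi_upto F K P n r x \<in> C n"
proof (induction r arbitrary: x)
  case 0 then show ?case by simp
next
  case (Suc r)
  have "psi_upto F K P n r x \<in> C n" using psi_upto_closed Suc.prems by simp
  then show ?case using Suc by (simp add: Psi_def)
qed

lemma top_face: "y \<in> C n \<Longrightarrow> 1 \<le> m \<Longrightarrow> m \<le> n \<Longrightarrow>
  \<exists>z\<in>C (n - m). F n m a (psi_upto F K P n (m - 1) y) = degen1_iter D (n - m) (m - 1) z"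
proof (induction m arbitrary: n y)
  case 0 then show ?case by simp
next
  case (Suc m)
  show ?case
  proof (cases "m = 0")
    case True
    then show ?thesis using face_closed[OF Suc.prems(1), of 1 a] Suc.prems by auto
  next
    case False
    obtain k where k: "n = Suc k" using Suc.prems by (cases n) auto
    have mk: "1 \<le> m" "m \<le> k" using False Suc.prems k by auto
    have u: "psi_upto F K P n (m - 1) y \<in> C n" using psi_upto_closed Suc.prems by simp
    have y': "F n (m + 1) a y \<in> C k" using face_closed[OF Suc.prems(1), of "m+1" a] Suc.prems k by simp
    have pu: "psi_upto F K P n m y = psi F K P (Suc k) m (psi_upto F K P n (m - 1) y)"
      using mk k by (cases m) auto
    have "F n (Suc m) a (psi_upto F K P n m y)
        = D k m (F k m a (F (Suc k) (m + 1) a (psi_upto F K P n (m - 1) y)))"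
      using face_psi_top[of "psi_upto F K P n (m - 1) y" k m a] u k mk pu by simp
    also have "F (Suc k) (m + 1) a (psi_upto F K P n (m - 1) y) = psi_upto F K P k (m - 1) (F n (m + 1) a y)"
      using face_psi_upto[OF Suc.prems(1), of "m - 1" "m + 1" a] k mk Suc.prems by simp
    finally have e: "F n (Suc m) a (psi_upto F K P n m y) = D k m (F k m a (psi_upto F K P k (m - 1) (F n (m + 1) a y)))" .
    obtain z where z: "z \<in> C (k - m)" "F k m a (psi_upto F K P k (m - 1) (F n (m + 1) a y)) = degen1_iter D (k - m) (m - 1) z"
      using Suc.IH[OF y' mk] by blast
    have "D (k - m + (m - 1) + 1) (m - 1 + 1) (degen1_iter D (k - m) (m - 1) z) = degen1_iter D (k - m) (m - 1 + 1) z"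
      using D_degen1[OF z(1)] by blast
    moreover have "k - m + (m - 1) + 1 = k" "m - 1 + 1 = m" using mk by auto
    ultimately have "D k m (degen1_iter D (k - m) (m - 1) z) = degen1_iter D (k - m) m z" by simp
    then show ?thesis using e z k by auto
  qed
qed

end

theorem proposition3p6:
  fixes C :: "nat \<Rightarrow> 'a set"
    and F :: "nat \<Rightarrow> nat \<Rightarrow> bool \<Rightarrow> 'a \<Rightarrow> 'a"
    and D :: "nat \<Rightarrow> nat \<Rightarrow> 'a \<Rightarrow> 'a"
    and K :: "nat \<Rightarrow> nat \<Rightarrow> bool \<Rightarrow> 'a \<Rightarrow> 'a"
    and P :: "nat \<Rightarrow> nat \<Rightarrow> 'a \<Rightarrow> 'a \<Rightarrow> 'a"
  assumes G: "cubical_omega_cat_conn C F D K P"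
    and x: "x \<in> Phi F K P n ` C n"
    and m: "1 \<le> m" "m \<le> n"
  shows "F n m a x = degen1_iter D (n - m) (m - 1) (face1_iter F n m a x)
       \<and> D n m (F n m a x) = degen1_iter D (n - m) m (face1_iter F n m a x)"
proof -
  interpret cubical_omega_cat_conn C F D K P by (rule G)
  obtain x0 where x0: "x0 \<in> C n" "x = Phi_upto F K P n n x0" using x by (auto simp: Phi_def)
  obtain m' where m': "m = Suc m'" using m by (cases m) auto
  obtain y where y: "y \<in> C n" "Phi_upto F K P n (m + (n - m)) x0 = Phi_upto F K P n m y"
    using Phi_reduce[OF x0(1), of m "n - m"] m by auto
  have xy: "x = Phi_upto F K P n m' (psi_upto F K P n m' y)"
    using x0 y m m' by (simp add: Psi_def)
  have u: "psi_upto F K P n m' y \<in> C n" using psi_upto_closed y m m' by simp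
  have "F n m a x = Phi_upto F K P (n - 1) m' (F n m a (psi_upto F K P n m' y))"
    using face_Phi_upto[OF u, of m' m a] xy m m' by simp
  moreover obtain z where z: "z \<in> C (n - m)" "F n m a (psi_upto F K P n (m - 1) y) = degen1_iter D (n - m) (m - 1) z"
    using top_face[OF y(1) m, of a] by blast
  moreover have "Phi_upto F K P (n - m + m') m' (degen1_iter D (n - m) m' z) = degen1_iter D (n - m) m' z"
    using Phi_upto_deg[OF z(1), of m' m'] by simp
  moreover have nm: "n - m + m' = n - 1" using m m' by simp
  ultimately have e1: "F n m a x = degen1_iter D (n - m) m' z" using m' by simp
  have xC: "x \<in> C n" using Phi_upto_closed x0 by simp
  have "face1_iter F n m a x = face1_iter F (n - 1) m' a (F n m a x)"
    using face1_comm[OF xC, of m' m a] m m' by simp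
  also have "\<dots> = z" using e1 face1_degen[OF z(1), of m' a] nm by simp
  finally have fz: "face1_iter F n m a x = z" .
  have "D (n - m + m' + 1) (m' + 1) (degen1_iter D (n - m) m' z) = degen1_iter D (n - m) (m' + 1) z"
    using D_degen1[OF z(1)] by blast
  moreover have "n - m + m' + 1 = n" using m m' by simp
  ultimately show ?thesis using e1 fz m' by simp
qed
end
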